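(* Let $A$ be a subring of $\mathbb{R}$ and let $H(A)$ be as in the context. For each $r\in A$ and each $p\in\mathbb{R}$ there exists $f\in H(A)$ with the following properties: (1) $f$ is supported on $[y,\infty)$ for some $y<p$; (2) the restriction of $f$ to $(p,\infty)$ equals $t\mapsto t+r$.
   Context: For a subring $A\subseteq\mathbb{R}$, let $P_A\subseteq\mathbb{R}\cup\{\infty\}$ be the set of fixed points of hyperbolic elements (those with $|\mathrm{trace}|>2$) of $PSL_2(A)$ acting by Möbius transformations. $H(A)$ is the group of orientation-preserving homeomorphisms $f$ of $\mathbb{R}$ for which there are finitely many breakpoints $t_1<\dots<t_n$ in $P_A$ such that on each of the intervals $(-\infty,t_1]$, $[t_i,t_{i+1}]$ and $[t_n,\infty)$, $f$ agrees with a map $t\mapsto(at+b)/(ct+d)$ with $\begin{pmatrix}a&b\\c&d\end{pmatrix}\in PSL_2(A)$. *)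

theory Defs
  imports "HOL-Analysis.Analysis"
begin

definition is_subring :: "real set \<Rightarrow> bool" where
  "is_subring A \<longleftrightarrow> 0 \<in> A \<and> 1 \<in> A \<and>
     (\<forall>x\<in>A. \<forall>y\<in>A. x + y \<in> A \<and> x - y \<in> A \<and> x * y \<in> A)"

text \<open>Matrices (a,b,c,d) with entries in A and determinant 1. Since M and -M induce the
  same Moebius map, Moebius maps of PSL_2(A) are exactly those of these matrices.\<close>
definition SL2 :: "real set \<Rightarrow> (real \<times> real \<times> real \<times> real) set" where
  "SL2 A = {(a,b,c,d). a \<in> A \<and> b \<in> A \<and> c \<in> A \<and> d \<in> A \<and> a * d - b * c = 1}"

definition mob :: "real \<times> real \<times> real \<times> real \<Rightarrow> real \<Rightarrow> real" where
  "mob M t = (case M of (a,b,c,d) \<Rightarrow> (a * t + b) / (c * t + d))"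

definition mob_den :: "real \<times> real \<times> real \<times> real \<Rightarrow> real \<Rightarrow> real" where
  "mob_den M t = (case M of (a,b,c,d) \<Rightarrow> c * t + d)"

text \<open>Real fixed points of hyperbolic elements (|trace| > 2). The point \<infinity> is irrelevant
  since breakpoints are real. t is fixed by (at+b)/(ct+d) iff c t^2 + (d-a) t - b = 0
  (for hyperbolic elements this polynomial is nonzero and ct+d \<noteq> 0 at such t).\<close>
definition P_A :: "real set \<Rightarrow> real set" where
  "P_A A = {t. \<exists>a b c d. (a,b,c,d) \<in> SL2 A \<and> \<bar>a + d\<bar> > 2 \<and> c * t\<^sup>2 + (d - a) * t - b = 0}"

definition pieces :: "real list \<Rightarrow> real set set" where
  "pieces ts = (if ts = [] then {UNIV}
     else {{..hd ts}, {last ts..}} \<union> {{ts ! i .. ts ! Suc i} | i. Suc i < length ts})"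

definition H :: "real set \<Rightarrow> (real \<Rightarrow> real) set" where
  "H A = {f. (\<exists>g. homeomorphism UNIV UNIV f g) \<and> strict_mono f \<and>
     (\<exists>ts. sorted_wrt (<) ts \<and> set ts \<subseteq> P_A A \<and>
        (\<forall>I\<in>pieces ts. \<exists>M\<in>SL2 A. \<forall>t\<in>I. mob_den M t \<noteq> 0 \<and> f t = mob M t))}"

end

theory Submission
  imports Defs
begin

lemma sr_facts:
  assumes "is_subring A" "x \<in> A" "y \<in> A"
  shows "x + y \<in> A" "x - y \<in> A" "x * y \<in> A" "- x \<in> A"
proof -
  show "x + y \<in> A" "x - y \<in> A" "x * y \<in> A" using assms unfolding is_subring_def by auto
  have "0 - x \<in> A" using assms unfolding is_subring_def by auto
  then show "- x \<in> A" by simp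
qed

lemma sr_int:
  assumes "is_subring A" shows "real_of_int k \<in> A"
proof (induction k rule: int_induct[where k=0])
  case base then show ?case using assms by (simp add: is_subring_def)
next
  case (step1 i) then show ?case using assms sr_facts(1)[of A "real_of_int i" 1]
    by (simp add: is_subring_def)
next
  case (step2 i) then show ?case using assms sr_facts(2)[of A "real_of_int i" 1]
    by (simp add: is_subring_def)
qed

lemma mid_mono:
  fixes a n s t :: real
  assumes "n < s" "s < t"
  shows "a + n - 1/(s-n) < a + n - 1/(t-n)"
proof -
  have "1/(t-n) < 1/(s-n)" using assms by (intro divide_strict_left_mono) auto
  then show ?thesis by simp
qed

lemma core:
  fixes a n x y r :: real
  assumes A: "is_subring A" and aA: "a \<in> A" and nA: "n \<in> A" and rA: "r \<in> A"
    and y0: "0 < y" and yx: "y < x" and ey: "y^2 - a*y + 1 = 0" and ex: "x^2 - (a-r)*x + 1 = 0"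
    and a2: "a > 2" and ar2: "\<bar>a - r\<bar> > 2"
  defines "f \<equiv> (\<lambda>t. if t \<le> y + n then t else if t \<le> x + n then a + n - 1/(t-n) else t + r)"
  shows "f \<in> H A \<and> (\<forall>t. t < y + n \<longrightarrow> f t = t) \<and> (\<forall>t. t > x + n \<longrightarrow> f t = t + r)"
proof -
  define u where "u = y + n"
  define v where "v = x + n"
  define M where "M = (\<lambda>t::real. a + n - 1/(t-n))"
  have x0: "0 < x" using y0 yx by simp
  have Mu: "M u = u"
  proof -
    have "a - 1/y = y" using ey y0 by (simp add: field_simps power2_eq_square)
    then show ?thesis unfolding M_def u_def by simp
  qed
  have Mv: "M v = v + r"
  proof -
    have "a - 1/x = x + r" using ex x0 by (simp add: field_simps power2_eq_square)
    then show ?thesis unfolding M_def v_def by simp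
  qed
  have uv: "u < v" unfolding u_def v_def using yx by simp
  have nu: "n < u" unfolding u_def using y0 by simp
  have Mmono: "\<And>s t. n < s \<Longrightarrow> s < t \<Longrightarrow> M s < M t" unfolding M_def by (rule mid_mono)
  have f_eq: "f = (\<lambda>t. if t \<le> u then t else if t \<le> v then M t else t + r)"
    unfolding f_def u_def v_def M_def by simp
  have sm: "strict_mono f"
  proof (rule strict_monoI)
    fix s t :: real assume st: "s < t"
    show "f s < f t"
    proof (cases "t \<le> u")
      case True then show ?thesis using st by (simp add: f_eq)
    next
      case tu: False
      show ?thesis
      proof (cases "t \<le> v")
        case tv: True
        show ?thesis
        proof (cases "s \<le> u")
          case True
          then have "f s \<le> u" by (simp add: f_eq)
          also have "u = M u" using Mu by simp
          also have "M u < M t" using Mmono nu tu by simp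
          finally show ?thesis using tu tv by (simp add: f_eq)
        next
          case False
          then show ?thesis using tu tv st Mmono[of s t] nu by (simp add: f_eq)
        qed
      next
        case tv: False
        show ?thesis
        proof (cases "s \<le> v")
          case sv: True
          have "f s \<le> v + r"
          proof (cases "s \<le> u")
            case True
            then have "f s = s" by (simp add: f_eq)
            also have "s \<le> u" by fact
            also have "u = M u" using Mu by simp
            also have "M u < M v" using Mmono nu uv by simp
            finally show ?thesis using Mv by simp
          next
            case False
            then have "f s = M s" using sv by (simp add: f_eq)
            also have "M s \<le> M v" using Mmono[of s v] False nu sv by (cases "s = v") auto
            finally show ?thesis using Mv by simp
          qed
          also have "v + r < f t" using tv tu by (simp add: f_eq)
          finally show ?thesis .
        next
          case False
          then show ?thesis using st tv uv by (simp add: f_eq)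
        qed
      qed
    qed
  qed
  have contM: "continuous_on {t. u \<le> t \<and> t \<le> v} M"
    unfolding M_def using nu by (intro continuous_intros) auto
  have c2: "continuous_on {t. u \<le> t} (\<lambda>t. if t \<le> v then M t else t + r)"
    apply (rule continuous_on_cases_le[where h="\<lambda>t. t"])
    using contM Mv by (auto intro!: continuous_intros)
  have cont: "continuous_on UNIV f"
    unfolding f_eq
    apply (rule continuous_on_cases_le[where h="\<lambda>t. t"])
    using c2 Mu uv by (auto intro!: continuous_intros)
  have surj: "f ` UNIV = UNIV"
  proof -
    { fix s :: real
      define lo where "lo = min s u"
      define hi where "hi = max (s - r) v"
      have flo: "f lo = lo" unfolding lo_def by (simp add: f_eq)
      have fhi: "f hi = hi + r"
      proof (cases "s - r \<le> v")
        case True then show ?thesis unfolding hi_def using Mv uv by (simp add: f_eq)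
      next
        case False then show ?thesis unfolding hi_def using uv by (simp add: f_eq)
      qed
      have "lo \<le> hi" unfolding lo_def hi_def using uv by auto
      moreover have "f lo \<le> s" using flo lo_def by simp
      moreover have "s \<le> f hi" using fhi hi_def by simp
      moreover have "continuous_on {lo..hi} f" using cont continuous_on_subset by blast
      ultimately obtain t where "f t = s" using IVT'[of f lo s hi] by blast
      then have "s \<in> range f" by blast }
    then show ?thesis by blast
  qed
  have homeo: "\<exists>g. homeomorphism UNIV UNIV f g"
  proof -
    have "inj_on f UNIV" using sm strict_mono_imp_inj_on by blast
    then obtain g where "homeomorphism UNIV (f ` UNIV) f g"
      using invariance_of_domain_homeomorphism[of UNIV f] cont by auto
    then show ?thesis using surj by auto
  qed
  have inA: "\<And>z. z \<in> A \<Longrightarrow> z + n \<in> A \<and> - ((z + n) * n) - 1 \<in> A \<and> - n \<in> A"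
  proof -
    fix z assume "z \<in> A"
    have 1: "z + n \<in> A" using sr_facts[OF A \<open>z \<in> A\<close> nA] by simp
    have "(z + n) * n \<in> A" using sr_facts[OF A 1 nA] by simp
    then have "- ((z + n) * n) \<in> A" using sr_facts[OF A _ nA] by simp
    moreover have "(1::real) \<in> A" using A by (simp add: is_subring_def)
    ultimately have "- ((z + n) * n) - 1 \<in> A" using sr_facts[OF A] by blast
    then show "z + n \<in> A \<and> - ((z + n) * n) - 1 \<in> A \<and> - n \<in> A"
      using 1 sr_facts[OF A nA nA] by simp
  qed
  have arA: "a - r \<in> A" using sr_facts[OF A aA rA] by simp
  have A01: "(0::real) \<in> A" "(1::real) \<in> A" using A by (auto simp: is_subring_def)
  have SLa: "(a + n, - ((a + n) * n) - 1, 1, - n) \<in> SL2 A"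
    using inA[OF aA] A01 unfolding SL2_def by (simp add: algebra_simps)
  have SLb: "(a - r + n, - ((a - r + n) * n) - 1, 1, - n) \<in> SL2 A"
    using inA[OF arA] A01 unfolding SL2_def by (simp add: algebra_simps)
  have uP: "u \<in> P_A A"
    unfolding P_A_def
    apply (rule CollectI, rule exI[of _ "a+n"], rule exI[of _ "- ((a + n) * n) - 1"],
        rule exI[of _ 1], rule exI[of _ "-n"])
    using SLa a2 ey unfolding u_def by (simp add: algebra_simps power2_eq_square)
  have vP: "v \<in> P_A A"
    unfolding P_A_def
    apply (rule CollectI, rule exI[of _ "a-r+n"], rule exI[of _ "- ((a - r + n) * n) - 1"],
        rule exI[of _ 1], rule exI[of _ "-n"])
    using SLb ar2 ex unfolding v_def by (simp add: algebra_simps power2_eq_square)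
  have SLid: "(1,0,0,1) \<in> SL2 A" using A01 unfolding SL2_def by simp
  have SLr: "(1,r,0,1) \<in> SL2 A" using A01 rA unfolding SL2_def by simp
  have pcs: "pieces [u, v] = {{..u}, {v..}, {u..v}}"
    unfolding pieces_def by auto
  have Mmob: "\<And>t. n < t \<Longrightarrow> M t = mob (a + n, - ((a + n) * n) - 1, 1, - n) t"
    unfolding M_def mob_def by (simp add: field_simps)
  have piecesok: "\<forall>I\<in>pieces [u,v]. \<exists>M\<in>SL2 A. \<forall>t\<in>I. mob_den M t \<noteq> 0 \<and> f t = mob M t"
  proof -
    have 1: "\<forall>t\<in>{..u}. mob_den (1,0,0,1) t \<noteq> 0 \<and> f t = mob (1,0,0,1) t"
      by (simp add: mob_den_def mob_def f_eq)
    have 2: "\<forall>t\<in>{v..}. mob_den (1,r,0,1) t \<noteq> 0 \<and> f t = mob (1,r,0,1) t"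
      using uv Mv by (auto simp: mob_den_def mob_def f_eq)
    have 3: "\<forall>t\<in>{u..v}. mob_den (a + n, - ((a + n) * n) - 1, 1, - n) t \<noteq> 0 \<and>
          f t = mob (a + n, - ((a + n) * n) - 1, 1, - n) t"
    proof
      fix t assume t: "t \<in> {u..v}"
      then have nt: "n < t" using nu by auto
      have "f t = M t" using t Mu by (auto simp: f_eq)
      then show "mob_den (a + n, - ((a + n) * n) - 1, 1, - n) t \<noteq> 0 \<and>
          f t = mob (a + n, - ((a + n) * n) - 1, 1, - n) t"
        using Mmob[OF nt] nt by (simp add: mob_den_def)
    qed
    show ?thesis unfolding pcs using 1 2 3 SLid SLr SLa by blast
  qed
  have "f \<in> H A"
    unfolding H_def
    using homeo sm piecesok uP vP uv
    by (intro CollectI conjI exI[of _ "[u,v]"]) auto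
  moreover have "\<forall>t. t < y + n \<longrightarrow> f t = t" unfolding f_def by simp
  moreover have "\<forall>t. t > x + n \<longrightarrow> f t = t + r" unfolding f_def using yx by simp
  ultimately show ?thesis by blast
qed

definition L :: "real \<Rightarrow> real" where "L a = (a + sqrt (a^2 - 4)) / 2"

lemma L_props:
  assumes "a > 2" shows "L a > 0" "(L a)^2 - a * L a + 1 = 0"
proof -
  have "2*2 < a*a" using mult_strict_mono[of 2 a 2 a] assms by simp
  then have "a^2 - 4 \<ge> 0" by (simp add: power2_eq_square)
  then have s: "(sqrt (a^2-4))^2 = a^2 - 4" by simp
  have "sqrt (a^2 - 4) \<ge> 0" using \<open>a^2 - 4 \<ge> 0\<close> by simp
  then have "a + sqrt (a^2 - 4) > 0" using assms by linarith
  then show "L a > 0" unfolding L_def by simp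
  show "(L a)^2 - a * L a + 1 = 0" unfolding L_def using s
    by (simp add: power2_eq_square field_simps)
qed

lemma L_mono:
  fixes a b :: real
  assumes "2 < a" "a < b" shows "L a < L b"
proof -
  have "a^2 - 4 \<le> b^2 - 4" using assms by (simp add: power_strict_mono less_imp_le power_mono)
  then have "sqrt (a^2 - 4) \<le> sqrt (b^2 - 4)" by simp
  then have "a + sqrt (a^2 - 4) < b + sqrt (b^2 - 4)" using assms by linarith
  then show ?thesis unfolding L_def by (simp add: divide_strict_right_mono)
qed

lemma inv_root:
  fixes z a :: real
  assumes "z > 0" "z^2 - a*z + 1 = 0" shows "(1/z)^2 - a*(1/z) + 1 = 0"
proof -
  have "z^2 * ((1/z)^2 - a*(1/z) + 1) = 1 - a*z + z^2" using assms(1)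
    by (simp add: field_simps power2_eq_square)
  also have "\<dots> = 0" using assms(2) by simp
  finally show ?thesis using assms(1) by simp
qed

theorem mainTheorem12:
  fixes A :: "real set" and r p :: real
  assumes "is_subring A" and "r \<in> A"
  shows "\<exists>f\<in>H A. (\<exists>y<p. \<forall>t. t < y \<longrightarrow> f t = t) \<and> (\<forall>t>p. f t = t + r)"
proof -
  have key: "\<exists>a x y. a \<in> A \<and> 0 < y \<and> y < x \<and> y^2 - a*y + 1 = 0 \<and> x^2 - (a-r)*x + 1 = 0
     \<and> a > 2 \<and> \<bar>a - r\<bar> > 2" if "r \<noteq> 0"
  proof (cases "r < 0")
    case True
    have a: "(3::real) \<in> A" using sr_int[OF assms(1), of 3] by simp
    show ?thesis
      apply (rule exI[of _ 3], rule exI[of _ "L (3 - r)"], rule exI[of _ "L 3"])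
      using a L_props[of 3] L_props[of "3-r"] L_mono[of 3 "3-r"] True by auto
  next
    case False
    then have r0: "r > 0" using that by simp
    define a where "a = real_of_int (\<lceil>r\<rceil> + 3)"
    have aA: "a \<in> A" unfolding a_def by (rule sr_int[OF assms(1)])
    have ar: "a - r \<ge> 3" unfolding a_def by linarith
    have a2: "a > 2" using ar r0 by simp
    have lt: "L (a - r) < L a" using L_mono[of "a-r" a] ar r0 by simp
    have p1: "L (a-r) > 0" "L a > 0" using L_props[of a] L_props[of "a-r"] ar a2 by auto
    have "1 / L a < 1 / L (a-r)" using lt p1 by (simp add: frac_less2)
    moreover have "(1 / L a)^2 - a * (1 / L a) + 1 = 0" by (rule inv_root[OF p1(2) L_props(2)[OF a2]])
    moreover have "(1 / L (a-r))^2 - (a-r) * (1 / L (a-r)) + 1 = 0"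
      by (rule inv_root[OF p1(1) L_props(2)]) (use ar in simp)
    moreover have "0 < 1 / L a" using p1 by simp
    moreover have "\<bar>a - r\<bar> > 2" using ar by simp
    ultimately show ?thesis using aA a2 by blast
  qed
  show ?thesis
  proof (cases "r = 0")
    case True
    have "id \<in> H A"
    proof -
      have "(1,0,0,1) \<in> SL2 A" using assms(1) unfolding SL2_def is_subring_def by simp
      then have "\<forall>I\<in>pieces []. \<exists>M\<in>SL2 A. \<forall>t\<in>I. mob_den M t \<noteq> 0 \<and> id t = mob M t"
        unfolding pieces_def by (auto simp: mob_def mob_den_def intro!: bexI[of _ "(1,0,0,1)"])
      moreover have "homeomorphism UNIV UNIV id id" unfolding homeomorphism_def by (auto intro: continuous_on_id)
      moreover have "strict_mono (id :: real \<Rightarrow> real)" by (simp add: strict_mono_def)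
      ultimately show ?thesis unfolding H_def by (intro CollectI conjI exI[of _ "[]"]) auto
    qed
    then show ?thesis using True by (intro bexI[of _ id]) (auto intro: exI[of _ "p - 1"])
  next
    case False
    then obtain a x y where k: "a \<in> A" "0 < y" "y < x" "y^2 - a*y + 1 = 0"
      "x^2 - (a-r)*x + 1 = 0" "a > 2" "\<bar>a - r\<bar> > 2" using key by blast
    define n where "n = real_of_int \<lfloor>p - x\<rfloor>"
    have nA: "n \<in> A" unfolding n_def by (rule sr_int[OF assms(1)])
    have xn: "x + n \<le> p" unfolding n_def by linarith
    from core[OF assms(1) k(1) nA assms(2) k(2-7)] obtain f where
      f: "f \<in> H A" "\<forall>t. t < y + n \<longrightarrow> f t = t" "\<forall>t. t > x + n \<longrightarrow> f t = t + r" by blast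
    show ?thesis
      apply (rule bexI[OF _ f(1)])
      using f(2,3) xn k(3) by (intro conjI exI[of _ "y+n"]) auto
  qed
qed

end
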